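(* Let $(X,\mathcal U)$ be a point-rotund quasi-uniform space. Then the following are equivalent: (1) $(X,\mathcal U)$ is uniformly semiregular; (2) $(X,\mathcal U)$ is uniformly regular; (3) $(X,\mathcal U)$ is uniformly completely regular. If moreover $(X,\mathcal U)$ is rotund, then (1)–(3) are equivalent to each of: (4) $\mathcal U$ is generated by a family of right-continuous premetrics; (5) $\mathcal U$ is generated by a family $\mathcal D$ of right-continuous and $\overline{\mathsf{dist}}$-continuous quasi-pseudometrics with $|\mathcal D|\le\chi(\mathcal U)$.
   Context: Entourages on $X$ are subsets of $X\times X$ containing the diagonal; $U\circ V=\{(x,z):\exists y\,((x,y)\in U,(y,z)\in V)\}$, $B(x;U)=\{y:(x,y)\in U\}$, $B(A;U)=\bigcup_{a\in A}B(a;U)$. A quasi-uniformity $\mathcal U$ on $X$ is a family of entourages closed under supersets, with any two members containing a common member, and such that each $U\in\mathcal U$ contains $V\circ V$ for some $V\in\mathcal U$. All topological notions refer to the topology $\tau_{\mathcal U}$ ($W$ open iff each $x\in W$ has $B(x;U)\subset W$ for some $U\in\mathcal U$); $\overline S$ is closure, $\overline S^\circ$ interior of closure. A base $\mathcal B\subset\mathcal U$ (each member of $\mathcal U$ contains a member of $\mathcal B$) is multiplicative if closed under $\circ$; point-rotund if $\overline{B(x;V)}\subset\overline{B(x;V\circ U)}^\circ$ for all $x$ and $U,V\in\mathcal B$; rotund if $B(\overline A;U)\subset\overline{B(A;W\circ U)}$ for all $A\subset X$, $U,W\in\mathcal B$. $(X,\mathcal U)$ is point-rotund (rotund) if $\mathcal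 U$ has a point-rotund (rotund) multiplicative base. $\chi(\mathcal U)$ is the least cardinality of a base of $\mathcal U$. A premetric is $d:X\times X\to[0,\infty)$ with $d(x,x)=0$; a quasi-pseudometric also satisfies the triangle inequality. $[d]_{<\varepsilon}=\{(x,y):d(x,y)<\varepsilon\}$, $B_d(x,\varepsilon)=\{y:d(x,y)<\varepsilon\}$, $B_d(A,\varepsilon)=\bigcup_{a\in A}B_d(a,\varepsilon)$. $d$ is $\mathcal U$-uniform if $[d]_{<\varepsilon}\in\mathcal U$ for all $\varepsilon>0$; right-continuous if $y\mapsto d(x,y)$ is continuous for each $x$; $\overline{\mathsf{dist}}$-continuous if for every non-empty $A\subset X$ the function $x\mapsto\inf\{\varepsilon>0:x\in\overline{B_d(A,\varepsilon)}\}$ is continuous. A family $\mathcal D$ of premetrics generates $\mathcal U$ if $\{[d]_{<\varepsilon}:d\in\mathcal D,\varepsilon>0\}$ is a subbase of $\mathcal U$ (finite intersections form a base). $(X,\mathcal U)$ is uniformly regular if for every $U\in\mathcal U$ there is $V\in\mathcal U$ with $\overline{B(x;V)}\subset B(x;U)$ for all $x$; uniformly semiregular if for every $U\in\mathcal U$ there is $V\in\mathcal U$ with $\overline{B(x;V)}^\circ\subset B(x;U)$ for all $x$; uniformly completely regular if for every $U\in\mathcal U$ there is a $\mathcal U$-uniform right-continuous premetric $d:X\times X\to[0,1]$ with $B_d(x,1)\subset B(x;U)$ for all $x$. *)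

theory Defs
  imports "HOL-Analysis.Analysis" "HOL-Library.Equipollence"
begin

text \<open>The underlying set X is the universe of the type 'a. Entourages are relations
  ('a \<times> 'a) set; U \<circ> V of the paper is the relational composition U O V;
  B(x;U) = U `` {x}; B(A;U) = U `` A.\<close>

definition quasi_uniformity :: "('a \<times> 'a) set set \<Rightarrow> bool" where
  "quasi_uniformity \<U> \<longleftrightarrow>
     \<U> \<noteq> {} \<and>
     (\<forall>U\<in>\<U>. Id \<subseteq> U) \<and>
     (\<forall>U\<in>\<U>. \<forall>V. U \<subseteq> V \<longrightarrow> V \<in> \<U>) \<and>
     (\<forall>U\<in>\<U>. \<forall>V\<in>\<U>. \<exists>W\<in>\<U>. W \<subseteq> U \<inter> V) \<and>
     (\<forall>U\<in>\<U>. \<exists>V\<in>\<U>. V O V \<subseteq> U)"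

definition qu_topology :: "('a \<times> 'a) set set \<Rightarrow> 'a topology" where
  "qu_topology \<U> = topology (\<lambda>W. \<forall>x\<in>W. \<exists>U\<in>\<U>. U `` {x} \<subseteq> W)"

definition is_base :: "('a \<times> 'a) set set \<Rightarrow> ('a \<times> 'a) set set \<Rightarrow> bool" where
  "is_base \<U> \<B> \<longleftrightarrow> \<B> \<subseteq> \<U> \<and> (\<forall>U\<in>\<U>. \<exists>B\<in>\<B>. B \<subseteq> U)"

definition multiplicative :: "('a \<times> 'a) set set \<Rightarrow> bool" where
  "multiplicative \<B> \<longleftrightarrow> (\<forall>U\<in>\<B>. \<forall>V\<in>\<B>. U O V \<in> \<B>)"

definition point_rotund_base :: "('a \<times> 'a) set set \<Rightarrow> ('a \<times> 'a) set set \<Rightarrow> bool" where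
  "point_rotund_base \<U> \<B> \<longleftrightarrow>
     (\<forall>x. \<forall>U\<in>\<B>. \<forall>V\<in>\<B>.
        qu_topology \<U> closure_of (V `` {x}) \<subseteq>
        qu_topology \<U> interior_of (qu_topology \<U> closure_of ((V O U) `` {x})))"

definition rotund_base :: "('a \<times> 'a) set set \<Rightarrow> ('a \<times> 'a) set set \<Rightarrow> bool" where
  "rotund_base \<U> \<B> \<longleftrightarrow>
     (\<forall>A. \<forall>U\<in>\<B>. \<forall>W\<in>\<B>.
        U `` (qu_topology \<U> closure_of A) \<subseteq> qu_topology \<U> closure_of ((W O U) `` A))"

definition point_rotund :: "('a \<times> 'a) set set \<Rightarrow> bool" where
  "point_rotund \<U> \<longleftrightarrow> (\<exists>\<B>. is_base \<U> \<B> \<and> multiplicative \<B> \<and> point_rotund_base \<U> \<B>)"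

definition rotund :: "('a \<times> 'a) set set \<Rightarrow> bool" where
  "rotund \<U> \<longleftrightarrow> (\<exists>\<B>. is_base \<U> \<B> \<and> multiplicative \<B> \<and> rotund_base \<U> \<B>)"

definition premetric :: "('a \<Rightarrow> 'a \<Rightarrow> real) \<Rightarrow> bool" where
  "premetric d \<longleftrightarrow> (\<forall>x y. 0 \<le> d x y) \<and> (\<forall>x. d x x = 0)"

definition quasi_pseudometric :: "('a \<Rightarrow> 'a \<Rightarrow> real) \<Rightarrow> bool" where
  "quasi_pseudometric d \<longleftrightarrow> premetric d \<and> (\<forall>x y z. d x z \<le> d x y + d y z)"

definition entourage_lt :: "('a \<Rightarrow> 'a \<Rightarrow> real) \<Rightarrow> real \<Rightarrow> ('a \<times> 'a) set" where
  "entourage_lt d \<epsilon> = {(x, y). d x y < \<epsilon>}"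

definition uniform_premetric :: "('a \<times> 'a) set set \<Rightarrow> ('a \<Rightarrow> 'a \<Rightarrow> real) \<Rightarrow> bool" where
  "uniform_premetric \<U> d \<longleftrightarrow> (\<forall>\<epsilon>>0. entourage_lt d \<epsilon> \<in> \<U>)"

definition right_continuous :: "('a \<times> 'a) set set \<Rightarrow> ('a \<Rightarrow> 'a \<Rightarrow> real) \<Rightarrow> bool" where
  "right_continuous \<U> d \<longleftrightarrow> (\<forall>x. continuous_map (qu_topology \<U>) euclideanreal (d x))"

definition closure_dist :: "('a \<times> 'a) set set \<Rightarrow> ('a \<Rightarrow> 'a \<Rightarrow> real) \<Rightarrow> 'a set \<Rightarrow> 'a \<Rightarrow> real" where
  "closure_dist \<U> d A x =
     Inf {\<epsilon>. \<epsilon> > 0 \<and> x \<in> qu_topology \<U> closure_of (entourage_lt d \<epsilon> `` A)}"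

definition closure_dist_continuous :: "('a \<times> 'a) set set \<Rightarrow> ('a \<Rightarrow> 'a \<Rightarrow> real) \<Rightarrow> bool" where
  "closure_dist_continuous \<U> d \<longleftrightarrow>
     (\<forall>A. A \<noteq> {} \<longrightarrow> continuous_map (qu_topology \<U>) euclideanreal (closure_dist \<U> d A))"

definition generates :: "('a \<Rightarrow> 'a \<Rightarrow> real) set \<Rightarrow> ('a \<times> 'a) set set \<Rightarrow> bool" where
  "generates \<D> \<U> \<longleftrightarrow>
     is_base \<U> {\<Inter>\<F> | \<F>. finite \<F> \<and>
                  \<F> \<subseteq> {entourage_lt d \<epsilon> | d \<epsilon>. d \<in> \<D> \<and> \<epsilon> > 0}}"

definition uniformly_regular :: "('a \<times> 'a) set set \<Rightarrow> bool" where
  "uniformly_regular \<U> \<longleftrightarrow>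
     (\<forall>U\<in>\<U>. \<exists>V\<in>\<U>. \<forall>x. qu_topology \<U> closure_of (V `` {x}) \<subseteq> U `` {x})"

definition uniformly_semiregular :: "('a \<times> 'a) set set \<Rightarrow> bool" where
  "uniformly_semiregular \<U> \<longleftrightarrow>
     (\<forall>U\<in>\<U>. \<exists>V\<in>\<U>. \<forall>x.
        qu_topology \<U> interior_of (qu_topology \<U> closure_of (V `` {x})) \<subseteq> U `` {x})"

definition uniformly_completely_regular :: "('a \<times> 'a) set set \<Rightarrow> bool" where
  "uniformly_completely_regular \<U> \<longleftrightarrow>
     (\<forall>U\<in>\<U>. \<exists>d. premetric d \<and> (\<forall>x y. d x y \<le> 1) \<and> uniform_premetric \<U> d \<and>
        right_continuous \<U> d \<and> (\<forall>x. {y. d x y < 1} \<subseteq> U `` {x}))"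

text \<open>|\<D>| \<le> \<chi>(\<U>): \<chi>(\<U>) is the least cardinality of a base, so this says
  |\<D>| \<le> |\<B>| for every base \<B> of \<U>.\<close>
definition card_le_chi :: "'b set \<Rightarrow> ('a \<times> 'a) set set \<Rightarrow> bool" where
  "card_le_chi \<D> \<U> \<longleftrightarrow> (\<forall>\<B>. is_base \<U> \<B> \<longrightarrow> \<D> \<lesssim> \<B>)"

end

theory Submission
  imports Defs
begin


lemma qu_ne: "quasi_uniformity \<U> \<Longrightarrow> \<U> \<noteq> {}"
  unfolding quasi_uniformity_def by (elim conjE)
lemma qu_Id: "quasi_uniformity \<U> \<Longrightarrow> U \<in> \<U> \<Longrightarrow> Id \<subseteq> U"
  unfolding quasi_uniformity_def by (elim conjE) (erule bspec)
lemma qu_up: "quasi_uniformity \<U> \<Longrightarrow> U \<in> \<U> \<Longrightarrow> U \<subseteq> V \<Longrightarrow> V \<in> \<U>"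
  unfolding quasi_uniformity_def by (elim conjE) simp
lemma qu_meet: "quasi_uniformity \<U> \<Longrightarrow> U \<in> \<U> \<Longrightarrow> V \<in> \<U> \<Longrightarrow> \<exists>W\<in>\<U>. W \<subseteq> U \<inter> V"
  unfolding quasi_uniformity_def by (elim conjE) simp
lemma qu_half: "quasi_uniformity \<U> \<Longrightarrow> U \<in> \<U> \<Longrightarrow> \<exists>V\<in>\<U>. V O V \<subseteq> U"
  unfolding quasi_uniformity_def by (elim conjE) simp
lemma qu_int: "quasi_uniformity \<U> \<Longrightarrow> U \<in> \<U> \<Longrightarrow> V \<in> \<U> \<Longrightarrow> U \<inter> V \<in> \<U>"
  by (meson qu_meet qu_up)

lemma qu_istop:
  assumes "quasi_uniformity \<U>"
  shows "istopology (\<lambda>W. \<forall>x\<in>W. \<exists>U\<in>\<U>. U `` {x} \<subseteq> W)"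
  unfolding istopology_def
proof (intro conjI allI impI)
  fix S T assume S: "\<forall>x\<in>S. \<exists>U\<in>\<U>. U `` {x} \<subseteq> S" and T: "\<forall>x\<in>T. \<exists>U\<in>\<U>. U `` {x} \<subseteq> T"
  show "\<forall>x\<in>S \<inter> T. \<exists>U\<in>\<U>. U `` {x} \<subseteq> S \<inter> T"
  proof
    fix x assume "x \<in> S \<inter> T"
    then obtain U1 U2 where u: "U1 \<in> \<U>" "U2 \<in> \<U>" "U1 `` {x} \<subseteq> S" "U2 `` {x} \<subseteq> T" using S T by blast
    have "U1 \<inter> U2 \<in> \<U>" by (rule qu_int[OF assms u(1,2)])
    moreover have "(U1 \<inter> U2) `` {x} \<subseteq> S \<inter> T" using u(3,4) Image_mono[of "U1 \<inter> U2" U1 "{x}" "{x}"] Image_mono[of "U1 \<inter> U2" U2 "{x}" "{x}"] by auto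
    ultimately show "\<exists>U\<in>\<U>. U `` {x} \<subseteq> S \<inter> T" by blast
  qed
next
  fix K assume "\<forall>S\<in>K. \<forall>x\<in>S. \<exists>U\<in>\<U>. U `` {x} \<subseteq> S"
  then show "\<forall>x\<in>\<Union>K. \<exists>U\<in>\<U>. U `` {x} \<subseteq> \<Union>K"
    by (meson Union_upper subset_trans UnionE)
qed

lemma openin_qu:
  assumes "quasi_uniformity \<U>"
  shows "openin (qu_topology \<U>) S \<longleftrightarrow> (\<forall>x\<in>S. \<exists>U\<in>\<U>. U `` {x} \<subseteq> S)"
  unfolding qu_topology_def using topology_inverse'[OF qu_istop[OF assms]] by simp

lemma topspace_qu:
  assumes "quasi_uniformity \<U>"
  shows "topspace (qu_topology \<U>) = UNIV"
proof -
  obtain U where "U \<in> \<U>" using qu_ne[OF assms] by blast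
  then have "openin (qu_topology \<U>) UNIV" using openin_qu[OF assms] by blast
  then show ?thesis using openin_subset by blast
qed

lemma subset_cl: "quasi_uniformity \<U> \<Longrightarrow> A \<subseteq> qu_topology \<U> closure_of A"
  by (simp add: closure_of_subset topspace_qu)

primrec Fc :: "(nat \<Rightarrow> ('a \<times> 'a) set) \<Rightarrow> nat \<Rightarrow> nat \<Rightarrow> ('a \<times> 'a) set" where
  "Fc W 0 j = Id"
| "Fc W (Suc n) j = (if even j then Fc W n (j div 2) else Fc W n (j div 2) O W (Suc n))"

locale qchain =
  fixes \<U> :: "('a \<times> 'a) set set" and B :: "('a \<times> 'a) set set" and W :: "nat \<Rightarrow> ('a \<times> 'a) set"
  assumes qu: "quasi_uniformity \<U>" and base: "is_base \<U> B" and mult: "multiplicative B"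
    and WB: "\<And>k. W k \<in> B" and Wstep: "\<And>k. W (Suc k) O W (Suc k) \<subseteq> W k"
begin

lemma BU: "V \<in> B \<Longrightarrow> V \<in> \<U>" using base unfolding is_base_def by auto
lemma WU: "W k \<in> \<U>" using BU[OF WB] .
lemma Id_W: "Id \<subseteq> W k" using qu_Id[OF qu WU] .
lemma W_mono1: "W (Suc k) \<subseteq> W k"
proof -
  have "W (Suc k) = Id O W (Suc k)" by simp
  also have "\<dots> \<subseteq> W (Suc k) O W (Suc k)" by (rule relcomp_mono) (use Id_W in auto)
  finally show ?thesis using Wstep[of k] by (rule subset_trans)
qed

lemma F_Id: "Id \<subseteq> Fc W n j"
proof (induction n arbitrary: j)
  case 0 then show ?case by simp
next
  case (Suc n)
  have "Id \<subseteq> Fc W n (j div 2) O W (Suc n)"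
    using Suc[of "j div 2"] Id_W[of "Suc n"] by auto
  then show ?case using Suc by simp
qed

lemma F0: "Fc W n 0 = Id" by (induction n) auto

lemma F_rescale: "Fc W (n + k) (h * 2 ^ k) = Fc W n h"
proof (induction k)
  case 0 then show ?case by simp
next
  case (Suc k)
  have "h * 2 ^ Suc k = 2 * (h * 2 ^ k)" by simp
  then show ?case using Suc by simp
qed

lemma F_odd: "Fc W (Suc n) (2 * h + 1) = Fc W n h O W (Suc n)" by simp
lemma F_even: "Fc W (Suc n) (2 * h) = Fc W n h" by simp

lemma F_step: "h + 1 < 2 ^ n \<Longrightarrow> Fc W n h O W n \<subseteq> Fc W n (h + 1)"
proof (induction n arbitrary: h)
  case 0 then show ?case by simp
next
  case (Suc n)
  obtain g where g: "h = 2 * g \<or> h = 2 * g + 1" by (metis oddE evenE)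
  then show ?case
  proof
    assume h: "h = 2 * g"
    then have "h + 1 = 2 * g + 1" by simp
    then show ?thesis using h by simp
  next
    assume h: "h = 2 * g + 1"
    have hp: "h + 1 = 2 * (g + 1)" using h by simp
    have lt: "g + 1 < 2 ^ n" using Suc.prems h by simp
    have "Fc W (Suc n) h O W (Suc n) = Fc W n g O (W (Suc n) O W (Suc n))"
      using h by (simp add: O_assoc)
    also have "\<dots> \<subseteq> Fc W n g O W n" using Wstep by (intro relcomp_mono) auto
    also have "\<dots> \<subseteq> Fc W n (g + 1)" using Suc.IH[OF lt] .
    also have "\<dots> = Fc W (Suc n) (h + 1)" using hp by (simp only: F_even)
    finally show ?thesis .
  qed
qed

lemma F_mono: "h \<le> h' \<Longrightarrow> h' < 2 ^ n \<Longrightarrow> Fc W n h \<subseteq> Fc W n h'"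
proof (induction h' rule: dec_induct)
  case base then show ?case by simp
next
  case (step m)
  have "Fc W n h \<subseteq> Fc W n m" using step by simp
  also have "\<dots> = Fc W n m O Id" by simp
  also have "\<dots> \<subseteq> Fc W n m O W n" using Id_W by (intro relcomp_mono) auto
  also have "\<dots> \<subseteq> Fc W n (Suc m)" using F_step[of m n] step.prems by simp
  finally show ?case .
qed

lemma F_W0': "h < 2 ^ n \<Longrightarrow> Fc W n h O W n \<subseteq> W 0"
proof (induction n arbitrary: h)
  case 0 then show ?case by simp
next
  case (Suc n)
  obtain g where g: "h = 2 * g \<or> h = 2 * g + 1" by (metis oddE evenE)
  have lt: "g < 2 ^ n" using Suc.prems g by auto
  from g show ?case
  proof
    assume h: "h = 2 * g"
    have "Fc W (Suc n) h O W (Suc n) = Fc W n g O W (Suc n)" using h by (simp only: F_even)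
    also have "\<dots> \<subseteq> Fc W n g O W n" using W_mono1 by (intro relcomp_mono) auto
    also have "\<dots> \<subseteq> W 0" using Suc.IH[OF lt] .
    finally show ?thesis .
  next
    assume h: "h = 2 * g + 1"
    have "Fc W (Suc n) h O W (Suc n) = Fc W n g O (W (Suc n) O W (Suc n))"
      using h by (simp add: O_assoc)
    also have "\<dots> \<subseteq> Fc W n g O W n" using Wstep by (intro relcomp_mono) auto
    also have "\<dots> \<subseteq> W 0" using Suc.IH[OF lt] .
    finally show ?thesis .
  qed
qed

lemma F_W0: "h < 2 ^ n \<Longrightarrow> Fc W n h \<subseteq> W 0"
proof -
  assume h: "h < 2 ^ n"
  have "Fc W n h = Fc W n h O Id" by simp
  also have "\<dots> \<subseteq> Fc W n h O W n" using Id_W by (intro relcomp_mono) auto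
  finally show ?thesis using F_W0'[OF h] by (rule subset_trans)
qed

lemma F_B: "0 < h \<Longrightarrow> h < 2 ^ n \<Longrightarrow> Fc W n h \<in> B"
proof (induction n arbitrary: h)
  case 0 then show ?case by simp
next
  case (Suc n)
  obtain g where g: "h = 2 * g \<or> h = 2 * g + 1" by (metis oddE evenE)
  have lt: "g < 2 ^ n" using Suc.prems g by auto
  from g show ?case
  proof
    assume h: "h = 2 * g"
    then have "0 < g" using Suc.prems by simp
    then show ?thesis using Suc.IH[OF _ lt] h by (simp only: F_even)
  next
    assume h: "h = 2 * g + 1"
    show ?thesis
    proof (cases "g = 0")
      case True then show ?thesis using h WB by (simp add: F0)
    next
      case False
      then have "Fc W n g \<in> B" using Suc.IH[OF _ lt] by simp
      then show ?thesis using h WB mult unfolding multiplicative_def by simp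
    qed
  qed
qed

lemma F_U: "0 < h \<Longrightarrow> h < 2 ^ n \<Longrightarrow> Fc W n h \<in> \<U>" using F_B BU by simp

lemma round_F:
  assumes "0 < h'" "h' < 2 ^ n'"
  shows "\<exists>h. 0 < h \<and> real h / 2 ^ N < real h' / 2 ^ n' + 1 / 2 ^ N \<and>
              (h < 2 ^ N \<longrightarrow> Fc W n' h' \<subseteq> Fc W N h)"
proof (cases "n' \<le> N")
  case True
  define k where "k = N - n'"
  have N: "N = n' + k" using True k_def by simp
  define h where "h = h' * 2 ^ k"
  have "Fc W N h = Fc W n' h'" unfolding h_def N by (rule F_rescale)
  moreover have "real h / 2 ^ N = real h' / 2 ^ n'" unfolding h_def N
    by (simp add: power_add)
  moreover have "0 < h" using assms unfolding h_def by simp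
  ultimately show ?thesis by (intro exI[of _ h]) auto
next
  case False
  define k where "k = n' - N"
  have N: "n' = N + k" using False k_def by simp
  define h where "h = (h' + 2 ^ k - 1) div 2 ^ k"
  have pk: "(0::nat) < 2 ^ k" by simp
  have h1: "h' \<le> h * 2 ^ k"
  proof -
    have e: "h' + 2 ^ k - 1 = h * 2 ^ k + (h' + 2 ^ k - 1) mod 2 ^ k" unfolding h_def
      by (metis div_mult_mod_eq)
    have "(h' + 2 ^ k - 1) mod 2 ^ k < 2 ^ k" using pk by (rule mod_less_divisor)
    then have "h' + 2 ^ k - 1 < h * 2 ^ k + 2 ^ k" using e by linarith
    then show ?thesis by linarith
  qed
  have h2: "h * 2 ^ k < h' + 2 ^ k"
  proof -
    have "h * 2 ^ k \<le> h' + 2 ^ k - 1" unfolding h_def by (rule div_times_less_eq_dividend)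
    then show ?thesis using pk by linarith
  qed
  have hpos: "0 < h" using h1 assms(1) by (cases h) auto
  have "real h / 2 ^ N = real (h * 2 ^ k) / 2 ^ n'" unfolding N by (simp add: power_add)
  also have "\<dots> < real (h' + 2 ^ k) / 2 ^ n'" using h2
    by (intro divide_strict_right_mono) (simp_all only: of_nat_less_iff, simp_all)
  also have "\<dots> = real h' / 2 ^ n' + 1 / 2 ^ N" unfolding N by (simp add: power_add add_divide_distrib)
  finally have ineq: "real h / 2 ^ N < real h' / 2 ^ n' + 1 / 2 ^ N" .
  have "h < 2 ^ N \<longrightarrow> Fc W n' h' \<subseteq> Fc W N h"
  proof
    assume "h < 2 ^ N"
    then have "h * 2 ^ k < 2 ^ n'" unfolding N by (simp add: power_add)
    then have "Fc W n' h' \<subseteq> Fc W n' (h * 2 ^ k)" by (rule F_mono[OF h1])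
    also have "\<dots> = Fc W N h" unfolding N by (rule F_rescale)
    finally show "Fc W n' h' \<subseteq> Fc W N h" .
  qed
  with ineq hpos show ?thesis by blast
qed

end


lemma pow_half_small: "0 < (e::real) \<Longrightarrow> \<exists>n. 1 / 2 ^ n < e"
proof -
  assume "0 < e"
  then obtain n where "(1/2::real) ^ n < e" using real_arch_pow_inv[of e "1/2"] by auto
  then show ?thesis by (auto simp: power_divide)
qed

lemma dyadic_dense:
  assumes "0 \<le> t" "t < 1" "0 < e"
  shows "\<exists>n h. 0 < h \<and> h < (2::nat) ^ n \<and> t < real h / 2 ^ n \<and> real h / 2 ^ n < t + e"
proof -
  obtain n where n: "1 / 2 ^ n < min e (1 - t)" using pow_half_small[of "min e (1 - t)"] assms by auto
  define h where "h = nat \<lfloor>t * 2 ^ n\<rfloor> + 1"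
  have fl: "real h = of_int \<lfloor>t * 2 ^ n\<rfloor> + 1" unfolding h_def using assms by simp
  have p: "(0::real) < 2 ^ n" by simp
  have a: "t * 2 ^ n < real h" using fl by linarith
  have b: "real h \<le> t * 2 ^ n + 1" using fl by linarith
  have a': "t < real h / 2 ^ n" using a p by (simp add: field_simps)
  have b': "real h / 2 ^ n \<le> t + 1 / 2 ^ n" using b p by (simp add: field_simps)
  have "real h / 2 ^ n < 1" using b' n by linarith
  then have "real h < 2 ^ n" using p by (simp add: field_simps)
  then have "h < 2 ^ n" by (metis of_nat_less_iff of_nat_numeral of_nat_power)
  moreover have "0 < h" unfolding h_def by simp
  ultimately show ?thesis using a' b' n by (intro exI[of _ n] exI[of _ h]) auto
qed

context qchain
begin

abbreviation cl where "cl A \<equiv> qu_topology \<U> closure_of A"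
abbreviation int where "int A \<equiv> qu_topology \<U> interior_of A"

definition Sset where
  "Sset z y = {real h / 2 ^ n | n h. 0 < h \<and> h < (2::nat) ^ n \<and> y \<in> cl (Fc W n h `` {z})} \<union> {1}"
definition ff where "ff z y = Inf (Sset z y)"

lemma S_ge0: "e \<in> Sset z y \<Longrightarrow> 0 \<le> e" unfolding Sset_def by auto
lemma S_ne: "Sset z y \<noteq> {}" unfolding Sset_def by auto
lemma S_bdd: "bdd_below (Sset z y)" using S_ge0 by (meson bdd_below.I)

lemma ff_ge0: "0 \<le> ff z y" unfolding ff_def using S_ne S_ge0 by (meson cInf_greatest)
lemma ff_le1: "ff z y \<le> 1" unfolding ff_def using S_bdd by (intro cInf_lower) (auto simp: Sset_def)
lemma ff_le: "0 < h \<Longrightarrow> h < 2 ^ n \<Longrightarrow> y \<in> cl (Fc W n h `` {z}) \<Longrightarrow> ff z y \<le> real h / 2 ^ n"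
  unfolding ff_def using S_bdd by (intro cInf_lower) (auto simp: Sset_def)
lemma ff_lt:
  assumes "ff z y < t"
  shows "1 < t \<or> (\<exists>n h. 0 < h \<and> h < (2::nat) ^ n \<and> y \<in> cl (Fc W n h `` {z}) \<and> real h / 2 ^ n < t)"
proof -
  obtain e where "e \<in> Sset z y" "e < t" using cInf_lessD[OF S_ne] assms unfolding ff_def by blast
  then show ?thesis unfolding Sset_def by auto
qed

lemma ff_self: "ff z z = 0"
proof -
  have "ff z z \<le> e" if e0: "0 < e" for e
  proof -
    obtain n where n: "1 / 2 ^ n < e" using pow_half_small[OF e0] by blast
    have "z \<in> Fc W (Suc n) 1 `` {z}" using F_Id[of "Suc n" 1] by auto
    then have "z \<in> cl (Fc W (Suc n) 1 `` {z})"
      using subset_cl[OF qu, of "Fc W (Suc n) 1 `` {z}"] by (rule rev_subsetD)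
    moreover have "1 < (2::nat) ^ Suc n" using one_less_power[of "2::nat" "Suc n"] by simp
    ultimately have "ff z z \<le> real 1 / 2 ^ Suc n" by (intro ff_le) auto
    also have "\<dots> \<le> 1 / 2 ^ n" by (simp add: field_simps)
    finally show ?thesis using n by linarith
  qed
  then have "ff z z \<le> 0" by (meson dense_ge)
  then show ?thesis using ff_ge0[of z z] by linarith
qed

lemma ff_lt1: "ff z y < 1 \<Longrightarrow> y \<in> cl (W 0 `` {z})"
proof -
  assume "ff z y < 1"
  from ff_lt[OF this] obtain n h where "0 < h" "h < (2::nat) ^ n" "y \<in> cl (Fc W n h `` {z})"
    by auto
  moreover have "cl (Fc W n h `` {z}) \<subseteq> cl (W 0 `` {z})"
    using F_W0[OF \<open>h < 2 ^ n\<close>] by (intro closure_of_mono Image_mono) auto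
  ultimately show ?thesis by (meson subsetD)
qed

lemma F_cmp:
  assumes "h < (2::nat) ^ n" "real h' / 2 ^ n' \<le> real h / 2 ^ n"
  shows "Fc W n' h' \<subseteq> Fc W n h"
proof -
  have "real h' * 2 ^ n \<le> real h * 2 ^ n'" using assms(2) by (simp add: field_simps)
  then have "real (h' * 2 ^ n) \<le> real (h * 2 ^ n')" by simp
  then have le: "h' * 2 ^ n \<le> h * 2 ^ n'" by linarith
  have lt: "h * 2 ^ n' < 2 ^ (n + n')" using assms(1) by (simp add: power_add)
  have "Fc W n' h' = Fc W (n' + n) (h' * 2 ^ n)" by (rule F_rescale[symmetric])
  also have "\<dots> \<subseteq> Fc W (n' + n) (h * 2 ^ n')" using F_mono le lt by (simp add: add.commute)
  also have "\<dots> = Fc W n h" using F_rescale[of n n' h] by (simp add: add.commute)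
  finally show ?thesis .
qed

lemma ff_closed: "closedin (qu_topology \<U>) {y. ff z y \<le> t}"
proof (cases "t < 0")
  case True
  have "\<not> ff z y \<le> t" for y using ff_ge0[of z y] True by linarith
  then have "{y. ff z y \<le> t} = {}" by simp
  then show ?thesis by simp
next
  case t0: False
  show ?thesis
  proof (cases "1 \<le> t")
    case True
    then have "{y. ff z y \<le> t} = topspace (qu_topology \<U>)" using ff_le1 topspace_qu[OF qu]
      by (auto intro: order_trans)
    then show ?thesis by simp
  next
    case False
    define K where "K = {cl (Fc W n h `` {z}) | n h. 0 < h \<and> h < (2::nat) ^ n \<and> t < real h / 2 ^ n}"
    have eq: "{y. ff z y \<le> t} = \<Inter>K"
    proof
      show "{y. ff z y \<le> t} \<subseteq> \<Inter>K"
      proof (clarsimp simp: K_def)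
        fix y n h assume y: "ff z y \<le> t" and h: "0 < h" "h < (2::nat) ^ n" "t < real h / 2 ^ n"
        then have "ff z y < real h / 2 ^ n" by linarith
        then have "1 < real h / 2 ^ n \<or> (\<exists>n' h'. 0 < h' \<and> h' < (2::nat) ^ n' \<and> y \<in> cl (Fc W n' h' `` {z}) \<and> real h' / 2 ^ n' < real h / 2 ^ n)"
          by (rule ff_lt)
        moreover have "\<not> 1 < real h / 2 ^ n"
        proof -
          have "real h < 2 ^ n" using h(2) by (metis of_nat_less_iff of_nat_numeral of_nat_power)
          then show ?thesis by (simp add: field_simps)
        qed
        ultimately obtain n' h' where "y \<in> cl (Fc W n' h' `` {z})" "real h' / 2 ^ n' < real h / 2 ^ n" by blast
        moreover then have "cl (Fc W n' h' `` {z}) \<subseteq> cl (Fc W n h `` {z})"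
          using F_cmp[OF h(2) less_imp_le] by (intro closure_of_mono Image_mono) auto
        ultimately show "y \<in> cl (Fc W n h `` {z})" by (meson subsetD)
      qed
    next
      show "\<Inter>K \<subseteq> {y. ff z y \<le> t}"
      proof
        fix y assume y: "y \<in> \<Inter>K"
        have "ff z y \<le> t + e" if e0: "0 < e" for e
        proof -
          obtain n h where nh: "0 < h" "h < (2::nat) ^ n" "t < real h / 2 ^ n" "real h / 2 ^ n < t + e"
            using dyadic_dense[OF _ _ e0, of t] t0 False by (auto simp: not_less not_le)
          then have "y \<in> cl (Fc W n h `` {z})" using y unfolding K_def by blast
          then have "ff z y \<le> real h / 2 ^ n" using ff_le nh by blast
          then show ?thesis using nh by linarith
        qed
        then show "y \<in> {y. ff z y \<le> t}" by (simp add: field_le_epsilon)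
      qed
    qed
    have "K \<noteq> {}"
      using dyadic_dense[of t 1] t0 False unfolding K_def by fastforce
    moreover have "\<forall>S\<in>K. closedin (qu_topology \<U>) S" unfolding K_def by auto
    ultimately show ?thesis unfolding eq by (intro closedin_Inter) auto
  qed
qed

end


context qchain
begin

lemma ff_open_pr:
  assumes pr: "point_rotund_base \<U> B"
  shows "openin (qu_topology \<U>) {y. ff z y < t}"
proof -
  have "\<exists>T. openin (qu_topology \<U>) T \<and> y \<in> T \<and> T \<subseteq> {y. ff z y < t}" if y: "ff z y < t" for y
  proof -
    from ff_lt[OF y] show ?thesis
    proof
      assume "1 < t"
      then have "topspace (qu_topology \<U>) \<subseteq> {y. ff z y < t}" using ff_le1 by (auto intro: le_less_trans)
      then show ?thesis using topspace_qu[OF qu] openin_topspace[of "qu_topology \<U>"] by (intro exI[of _ "topspace (qu_topology \<U>)"]) auto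
    next
      assume "\<exists>n h. 0 < h \<and> h < (2::nat) ^ n \<and> y \<in> cl (Fc W n h `` {z}) \<and> real h / 2 ^ n < t"
      then obtain n h where nh: "0 < h" "h < (2::nat) ^ n" "y \<in> cl (Fc W n h `` {z})" "real h / 2 ^ n < t"
        by blast
      obtain k where k: "1 / 2 ^ k < t - real h / 2 ^ n" using pow_half_small nh(4) by (metis diff_gt_0_iff_gt)
      define m where "m = n + k"
      define g where "g = h * 2 ^ k"
      have Fg: "Fc W m g = Fc W n h" unfolding m_def g_def by (rule F_rescale)
      have g0: "0 < g" "g < 2 ^ m" using nh unfolding g_def m_def by (simp_all add: power_add)
      have gv: "real g / 2 ^ m = real h / 2 ^ n" unfolding g_def m_def by (simp add: power_add)
      define T where "T = int (cl (Fc W (Suc m) (2 * g + 1) `` {z}))"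
      have pr': "\<And>x U V. U \<in> B \<Longrightarrow> V \<in> B \<Longrightarrow> cl (V `` {x}) \<subseteq> int (cl ((V O U) `` {x}))"
        using pr unfolding point_rotund_base_def by blast
      have "cl (Fc W m g `` {z}) \<subseteq> int (cl ((Fc W m g O W (Suc m)) `` {z}))"
        by (rule pr'[OF WB F_B[OF g0]])
      moreover have "Fc W m g O W (Suc m) = Fc W (Suc m) (2 * g + 1)" by simp
      ultimately have sub: "cl (Fc W n h `` {z}) \<subseteq> T" unfolding T_def Fg by simp
      have yT: "y \<in> T" using nh(3) sub by (meson subsetD)
      have lt2: "2 * g + 1 < 2 ^ Suc m" using g0 by simp
      have val: "real (2 * g + 1) / 2 ^ Suc m = real h / 2 ^ n + 1 / 2 ^ Suc m"
        using gv by (simp add: field_simps)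
      have "1 / 2 ^ Suc m \<le> 1 / (2::real) ^ k" unfolding m_def
        by (intro divide_left_mono power_increasing) auto
      then have vt: "real (2 * g + 1) / 2 ^ Suc m < t" using val k by linarith
      have "T \<subseteq> {y. ff z y < t}"
      proof
        fix y' assume "y' \<in> T"
        then have "y' \<in> cl (Fc W (Suc m) (2 * g + 1) `` {z})" unfolding T_def
          using interior_of_subset[of "qu_topology \<U>" "cl (Fc W (Suc m) (2 * g + 1) `` {z})"] by (meson subsetD)
        then have "ff z y' \<le> real (2 * g + 1) / 2 ^ Suc m" by (intro ff_le lt2) auto
        then show "y' \<in> {y. ff z y < t}" using vt by simp
      qed
      moreover have "openin (qu_topology \<U>) T" unfolding T_def by simp
      ultimately show ?thesis using yT by (intro exI[of _ T]) simp
    qed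
  qed
  then show ?thesis by (subst openin_subopen) blast
qed

lemma ff_cont_pr:
  assumes "point_rotund_base \<U> B"
  shows "continuous_map (qu_topology \<U>) euclideanreal (ff z)"
  unfolding continuous_map_upper_lower_semicontinuous_lte topspace_qu[OF qu]
  using ff_open_pr[OF assms] ff_closed by simp

lemma ff_key:
  assumes rb: "rotund_base \<U> B" and xy: "(x, y) \<in> W (Suc (Suc N))"
  shows "ff z y \<le> ff z x + 2 / 2 ^ N"
proof -
  have "ff z y \<le> ff z x + 2 / 2 ^ N + e" if e0: "0 < e" for e
  proof -
    have "ff z x < ff z x + e" using e0 by simp
    from ff_lt[OF this] show ?thesis
    proof
      assume "1 < ff z x + e"
      moreover have "0 < 2 / (2::real) ^ N" by simp
      ultimately show ?thesis using ff_le1[of z y] by linarith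
    next
      assume "\<exists>n h. 0 < h \<and> h < (2::nat) ^ n \<and> x \<in> cl (Fc W n h `` {z}) \<and> real h / 2 ^ n < ff z x + e"
      then obtain n' h' where nh: "0 < h'" "h' < (2::nat) ^ n'" "x \<in> cl (Fc W n' h' `` {z})"
          "real h' / 2 ^ n' < ff z x + e" by blast
      obtain h where h: "0 < h" "real h / 2 ^ N < real h' / 2 ^ n' + 1 / 2 ^ N"
        "h < 2 ^ N \<longrightarrow> Fc W n' h' \<subseteq> Fc W N h"
        using round_F[OF nh(1,2)] by blast
      show ?thesis
      proof (cases "h < 2 ^ N")
        case False
        then have "(2::real) ^ N \<le> real h" by (metis not_less of_nat_le_iff of_nat_numeral of_nat_power)
        then have "1 \<le> real h / 2 ^ N" by simp
        moreover have "1 / (2::real) ^ N \<le> 2 / 2 ^ N" by (simp add: divide_right_mono)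
        ultimately show ?thesis using h(2) nh(4) ff_le1[of z y] by linarith
      next
        case True
        have "cl (Fc W n' h' `` {z}) \<subseteq> cl (Fc W N h `` {z})"
          using h(3) True by (intro closure_of_mono Image_mono) auto
        then have xA: "x \<in> cl (Fc W N h `` {z})" using nh(3) by (meson subsetD)
        have "y \<in> W (Suc (Suc N)) `` cl (Fc W N h `` {z})" by (rule ImageI[OF xy xA])
        also have "\<dots> \<subseteq> cl ((W (Suc (Suc N)) O W (Suc (Suc N))) `` (Fc W N h `` {z}))"
          using rb WB unfolding rotund_base_def by simp
        also have "\<dots> \<subseteq> cl (W (Suc N) `` (Fc W N h `` {z}))"
          using Wstep by (intro closure_of_mono Image_mono) auto
        also have "W (Suc N) `` (Fc W N h `` {z}) = Fc W (Suc N) (2 * h + 1) `` {z}"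
          by (simp only: F_odd relcomp_Image)
        finally have "ff z y \<le> real (2 * h + 1) / 2 ^ Suc N" using True h(1) by (intro ff_le) auto
        also have "\<dots> = real h / 2 ^ N + 1 / 2 ^ Suc N" by (simp add: field_simps)
        finally have f1: "ff z y \<le> real h / 2 ^ N + 1 / 2 ^ Suc N" .
        have f2: "1 / (2::real) ^ Suc N \<le> 1 / 2 ^ N" by (intro divide_left_mono power_increasing) auto
        have f3: "2 / (2::real) ^ N = 1 / 2 ^ N + 1 / 2 ^ N" by (simp add: field_simps)
        show ?thesis using f1 f2 f3 h(2) nh(4) by linarith
      qed
    qed
  qed
  then show ?thesis by (simp add: field_le_epsilon)
qed

end


context qchain
begin

definition dd where "dd x y = Sup (range (\<lambda>z. max 0 (ff z y - ff z x)))"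

lemma dd_bdd: "bdd_above (range (\<lambda>z. max 0 (ff z y - ff z x)))"
proof (rule bdd_aboveI)
  fix e assume "e \<in> range (\<lambda>z. max 0 (ff z y - ff z x))"
  then obtain z where "e = max 0 (ff z y - ff z x)" by blast
  then show "e \<le> 1" using ff_le1[of z y] ff_ge0[of z x] by simp
qed

lemma dd_ge: "max 0 (ff z y - ff z x) \<le> dd x y"
  unfolding dd_def by (rule cSUP_upper[OF _ dd_bdd]) simp

lemma dd_ge0: "0 \<le> dd x y" using dd_ge[of x y x] by (meson max.cobounded1 order_trans)

lemma dd_ge_ff: "ff x y \<le> dd x y" using dd_ge[of x y x] ff_self[of x] ff_ge0[of x y] by simp

lemma dd_self: "dd x x = 0"
proof -
  have "dd x x \<le> 0" unfolding dd_def by (rule cSUP_least) auto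
  then show ?thesis using dd_ge0[of x x] by linarith
qed

lemma dd_tri: "dd x z \<le> dd x y + dd y z"
  unfolding dd_def[of x z]
proof (rule cSUP_least)
  fix w
  have "max 0 (ff w z - ff w x) \<le> max 0 (ff w y - ff w x) + max 0 (ff w z - ff w y)" by simp
  also have "\<dots> \<le> dd x y + dd y z" using dd_ge by (intro add_mono)
  finally show "max 0 (ff w z - ff w x) \<le> dd x y + dd y z" .
qed simp

lemma dd_qpm: "quasi_pseudometric dd"
  unfolding quasi_pseudometric_def premetric_def using dd_ge0 dd_self dd_tri by blast

context
  assumes rb: "rotund_base \<U> B"
begin

lemma dd_key: "(x, y) \<in> W (Suc (Suc N)) \<Longrightarrow> dd x y \<le> 2 / 2 ^ N"
  unfolding dd_def
proof (rule cSUP_least)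
  fix z assume "(x, y) \<in> W (Suc (Suc N))"
  then have "ff z y \<le> ff z x + 2 / 2 ^ N" by (rule ff_key[OF rb])
  then show "max 0 (ff z y - ff z x) \<le> 2 / 2 ^ N" by simp
qed simp

lemma small_N: "0 < e \<Longrightarrow> \<exists>N. 2 / (2::real) ^ N < e"
proof -
  assume "0 < e"
  then obtain N where "1 / 2 ^ N < e / 2" using pow_half_small[of "e/2"] by auto
  then show ?thesis by (intro exI[of _ N]) (simp add: field_simps)
qed

lemma dd_uniform: "uniform_premetric \<U> dd"
  unfolding uniform_premetric_def
proof (intro allI impI)
  fix e :: real assume "0 < e"
  then obtain N where N: "2 / 2 ^ N < e" using small_N by blast
  have "W (Suc (Suc N)) \<subseteq> entourage_lt dd e"
  proof
    fix p assume "p \<in> W (Suc (Suc N))"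
    moreover obtain a b where "p = (a, b)" by fastforce
    ultimately have "dd a b \<le> 2 / 2 ^ N" using dd_key by simp
    then show "p \<in> entourage_lt dd e" using N \<open>p = (a, b)\<close> unfolding entourage_lt_def by simp
  qed
  then show "entourage_lt dd e \<in> \<U>" by (rule qu_up[OF qu WU])
qed

lemma dd_rc: "right_continuous \<U> dd"
  unfolding right_continuous_def
proof
  fix x
  have o1: "openin (qu_topology \<U>) {y. dd x y < a}" for a
    unfolding openin_qu[OF qu]
  proof
    fix y assume "y \<in> {y. dd x y < a}"
    then have "0 < a - dd x y" by simp
    then obtain N where N0: "2 / 2 ^ N < a - dd x y" using small_N by blast
    then have N: "dd x y + 2 / 2 ^ N < a" by linarith
    have "W (Suc (Suc N)) `` {y} \<subseteq> {y. dd x y < a}"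
    proof
      fix y' assume "y' \<in> W (Suc (Suc N)) `` {y}"
      then have "dd y y' \<le> 2 / 2 ^ N" using dd_key[of y y' N] by simp
      then show "y' \<in> {y. dd x y < a}" using dd_tri[of x y' y] N by simp
    qed
    then show "\<exists>U\<in>\<U>. U `` {y} \<subseteq> {y. dd x y < a}" by (rule bexI[OF _ WU])
  qed
  have o2: "openin (qu_topology \<U>) {y. a < dd x y}" for a
  proof -
    have eq: "{y. a < dd x y} = (\<Union>z. {y. a < max 0 (ff z y - ff z x)})"
      unfolding dd_def using less_cSUP_iff[OF _ dd_bdd] by auto
    have "openin (qu_topology \<U>) {y. a < max 0 (ff z y - ff z x)}" for z
    proof (cases "a < 0")
      case True
      then have "{y. a < max 0 (ff z y - ff z x)} = topspace (qu_topology \<U>)"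
        using topspace_qu[OF qu] by auto
      then show ?thesis by simp
    next
      case False
      then have "{y. a < max 0 (ff z y - ff z x)} = topspace (qu_topology \<U>) - {y. ff z y \<le> a + ff z x}"
        using topspace_qu[OF qu] by auto
      then show ?thesis using ff_closed by (simp add: openin_diff)
    qed
    then show ?thesis unfolding eq by (intro openin_Union) auto
  qed
  show "continuous_map (qu_topology \<U>) euclideanreal (dd x)"
    unfolding continuous_map_upper_lower_semicontinuous_lt topspace_qu[OF qu]
    using o1 o2 by simp
qed

lemma dd_cdc: "closure_dist_continuous \<U> dd"
  unfolding closure_dist_continuous_def
proof (intro allI impI)
  fix A :: "'a set" assume Ane: "A \<noteq> {}"
  define T where "T e = cl (entourage_lt dd e `` A)" for e
  define g where "g = closure_dist \<U> dd A"
  define Sx where "Sx x = {e. e > 0 \<and> x \<in> T e}" for x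
  have gdef: "g x = Inf (Sx x)" for x unfolding g_def closure_dist_def Sx_def T_def by simp
  have Tmono: "e \<le> e' \<Longrightarrow> T e \<subseteq> T e'" for e e'
    unfolding T_def entourage_lt_def by (intro closure_of_mono) (auto intro: less_le_trans)
  have Sne: "Sx x \<noteq> {}" for x
  proof -
    obtain a where a: "a \<in> A" using Ane by blast
    have "(a, x) \<in> entourage_lt dd (dd a x + 1)" unfolding entourage_lt_def by simp
    then have "x \<in> entourage_lt dd (dd a x + 1) `` A" using a by (rule ImageI)
    then have "x \<in> T (dd a x + 1)" unfolding T_def by (rule subsetD[OF subset_cl[OF qu]])
    then show ?thesis unfolding Sx_def using dd_ge0[of a x] by (intro ex_in_conv[THEN iffD1] exI[of _ "dd a x + 1"]) auto
  qed
  have Sbdd: "bdd_below (Sx x)" for x unfolding Sx_def by (rule bdd_belowI[of _ 0]) auto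
  have g0: "0 \<le> g x" for x unfolding gdef using Sne by (intro cInf_greatest) (auto simp: Sx_def)
  have glow: "e \<in> Sx x \<Longrightarrow> g x \<le> e" for e x unfolding gdef using Sbdd by (intro cInf_lower)
  have o1: "openin (qu_topology \<U>) {x. g x < t}" for t
    unfolding openin_qu[OF qu]
  proof
    fix x assume "x \<in> {x. g x < t}"
    then have "Inf (Sx x) < t" using gdef by simp
    then obtain e where e: "e \<in> Sx x" "e < t" using cInf_lessD[OF Sne[of x]] by blast
    obtain N where N: "2 / 2 ^ N < t - e" using small_N[of "t - e"] e by auto
    let ?U = "W (Suc (Suc (Suc N)))"
    have "?U `` {x} \<subseteq> {x. g x < t}"
    proof
      fix y assume y: "y \<in> ?U `` {x}"
      have xy: "(x, y) \<in> ?U" using y by simp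
      have "x \<in> T e" using e unfolding Sx_def by simp
      then have "y \<in> ?U `` T e" by (rule ImageI[OF xy])
      also have "\<dots> \<subseteq> cl ((?U O ?U) `` (entourage_lt dd e `` A))"
        unfolding T_def using rb WB unfolding rotund_base_def by simp
      also have "\<dots> \<subseteq> cl (entourage_lt dd (e + 2 / 2 ^ N) `` A)"
      proof (intro closure_of_mono subsetI)
        fix w assume "w \<in> (?U O ?U) `` (entourage_lt dd e `` A)"
        then obtain a v where av: "a \<in> A" "dd a v < e" "(v, w) \<in> ?U O ?U"
          unfolding entourage_lt_def by auto
        then have "(v, w) \<in> W (Suc (Suc N))" using subsetD[OF Wstep[of "Suc (Suc N)"], of "(v, w)"] by simp
        then have "dd v w \<le> 2 / 2 ^ N" by (rule dd_key)
        then have "dd a w < e + 2 / 2 ^ N" using dd_tri[of a w v] av by simp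
        then show "w \<in> entourage_lt dd (e + 2 / 2 ^ N) `` A" using av unfolding entourage_lt_def by auto
      qed
      finally have "y \<in> T (e + 2 / 2 ^ N)" unfolding T_def .
      moreover have "0 < e + 2 / 2 ^ N"
      proof -
        have "0 < e" using e(1) unfolding Sx_def by simp
        moreover have "0 < 2 / (2::real) ^ N" by simp
        ultimately show ?thesis by linarith
      qed
      ultimately have "g y \<le> e + 2 / 2 ^ N" by (intro glow) (auto simp: Sx_def)
      then show "y \<in> {x. g x < t}" using N by simp
    qed
    then show "\<exists>U\<in>\<U>. U `` {x} \<subseteq> {x. g x < t}" by (rule bexI[OF _ WU])
  qed
  have c2: "closedin (qu_topology \<U>) {x. g x \<le> t}" for t
  proof (cases "t < 0")
    case True
    have "\<not> g x \<le> t" for x using g0[of x] True by linarith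
    then have "{x. g x \<le> t} = {}" by simp
    then show ?thesis by simp
  next
    case False
    have eq: "{x. g x \<le> t} = \<Inter>(T ` {e. t < e})"
    proof
      show "{x. g x \<le> t} \<subseteq> \<Inter>(T ` {e. t < e})"
      proof clarsimp
        fix x e assume "g x \<le> t" "t < e"
        then have "g x < e" by linarith
        then obtain e' where "e' \<in> Sx x" "e' < e" using cInf_lessD[OF Sne] gdef by metis
        then show "x \<in> T e" using Tmono[of e' e] unfolding Sx_def by auto
      qed
    next
      show "\<Inter>(T ` {e. t < e}) \<subseteq> {x. g x \<le> t}"
      proof
        fix x assume x: "x \<in> \<Inter>(T ` {e. t < e})"
        have "g x \<le> t + e" if "0 < e" for e
          using x that False by (intro glow) (auto simp: Sx_def)
        then show "x \<in> {x. g x \<le> t}" by (simp add: field_le_epsilon)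
      qed
    qed
    have "closedin (qu_topology \<U>) (T e)" for e unfolding T_def by simp
    moreover have "T ` {e. t < e} \<noteq> {}" by (auto intro: gt_ex)
    ultimately show ?thesis unfolding eq by (intro closedin_Inter) auto
  qed
  show "continuous_map (qu_topology \<U>) euclideanreal (closure_dist \<U> dd A)"
    unfolding g_def[symmetric] continuous_map_upper_lower_semicontinuous_lte topspace_qu[OF qu]
    using o1 c2 by simp
qed

end

end


lemma chain_exists:
  assumes qu: "quasi_uniformity \<U>" and base: "is_base \<U> B" and W0: "W0 \<in> B"
  shows "\<exists>W. W 0 = W0 \<and> (\<forall>k. W k \<in> B) \<and> (\<forall>k. W (Suc k) O W (Suc k) \<subseteq> W k)"
proof -
  have "\<forall>V\<in>B. \<exists>V'. V' \<in> B \<and> V' O V' \<subseteq> V"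
  proof
    fix V assume "V \<in> B"
    then have "V \<in> \<U>" using base unfolding is_base_def by auto
    then obtain V1 where V1: "V1 \<in> \<U>" "V1 O V1 \<subseteq> V" using qu_half[OF qu] by blast
    then obtain V' where V': "V' \<in> B" "V' \<subseteq> V1" using base unfolding is_base_def by blast
    have "V' O V' \<subseteq> V1 O V1" by (rule relcomp_mono[OF V'(2) V'(2)])
    then show "\<exists>V'. V' \<in> B \<and> V' O V' \<subseteq> V" using V' V1(2) by (meson subset_trans)
  qed
  then obtain s where s: "\<forall>V\<in>B. s V \<in> B \<and> s V O s V \<subseteq> V" by metis
  define W where "W k = (s ^^ k) W0" for k
  have WB: "W k \<in> B" for k
    by (induction k) (use W0 s in \<open>auto simp: W_def\<close>)
  have "W (Suc k) O W (Suc k) \<subseteq> W k" for k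
    using s WB[of k] unfolding W_def by simp
  moreover have "W 0 = W0" unfolding W_def by simp
  ultimately show ?thesis using WB by blast
qed

lemma reg_base:
  assumes qu: "quasi_uniformity \<U>" and reg: "uniformly_regular \<U>" and base: "is_base \<U> B" and U: "U \<in> \<U>"
  shows "\<exists>W0\<in>B. \<forall>x. qu_topology \<U> closure_of (W0 `` {x}) \<subseteq> U `` {x}"
proof -
  obtain V where V: "V \<in> \<U>" "\<forall>x. qu_topology \<U> closure_of (V `` {x}) \<subseteq> U `` {x}"
    using reg U unfolding uniformly_regular_def by blast
  obtain W0 where W0: "W0 \<in> B" "W0 \<subseteq> V" using base V(1) unfolding is_base_def by blast
  have "qu_topology \<U> closure_of (W0 `` {x}) \<subseteq> U `` {x}" for x
  proof -
    have "qu_topology \<U> closure_of (W0 `` {x}) \<subseteq> qu_topology \<U> closure_of (V `` {x})"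
      using W0(2) by (intro closure_of_mono Image_mono) auto
    then show ?thesis using V(2) by (meson subset_trans)
  qed
  then show ?thesis using W0(1) by blast
qed

lemma ucr_lemma:
  assumes qu: "quasi_uniformity \<U>" and pr: "point_rotund \<U>" and reg: "uniformly_regular \<U>"
    and U: "U \<in> \<U>"
  shows "\<exists>d. premetric d \<and> (\<forall>x y. d x y \<le> 1) \<and> uniform_premetric \<U> d \<and>
        right_continuous \<U> d \<and> (\<forall>x. {y. d x y < 1} \<subseteq> U `` {x})"
proof -
  obtain B where B: "is_base \<U> B" "multiplicative B" "point_rotund_base \<U> B"
    using pr unfolding point_rotund_def by blast
  obtain W0 where W0: "W0 \<in> B" "\<forall>x. qu_topology \<U> closure_of (W0 `` {x}) \<subseteq> U `` {x}"
    using reg_base[OF qu reg B(1) U] by blast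
  obtain W where W: "W 0 = W0" "\<forall>k. W k \<in> B" "\<forall>k. W (Suc k) O W (Suc k) \<subseteq> W k"
    using chain_exists[OF qu B(1) W0(1)] by blast
  interpret qchain \<U> B W using qu B W by unfold_locales auto
  have pm: "premetric ff" unfolding premetric_def using ff_ge0 ff_self by blast
  have un: "uniform_premetric \<U> ff"
    unfolding uniform_premetric_def
  proof (intro allI impI)
    fix e :: real assume "0 < e"
    then obtain n where n: "1 / 2 ^ n < e" using pow_half_small by blast
    have lt: "1 < (2::nat) ^ Suc n" using one_less_power[of "2::nat" "Suc n"] by simp
    have "Fc W (Suc n) 1 \<subseteq> entourage_lt ff e"
    proof
      fix p assume p: "p \<in> Fc W (Suc n) 1"
      obtain a b where ab: "p = (a, b)" by fastforce
      then have "b \<in> Fc W (Suc n) 1 `` {a}" using p by simp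
      then have "b \<in> cl (Fc W (Suc n) 1 `` {a})" by (rule subsetD[OF subset_cl[OF qu]])
      then have "ff a b \<le> real 1 / 2 ^ Suc n" using lt by (intro ff_le) auto
      then have "ff a b \<le> 1 / (2::real) ^ Suc n" by simp
      also have "1 / (2::real) ^ Suc n \<le> 1 / 2 ^ n" by (intro divide_left_mono power_increasing) auto
      finally show "p \<in> entourage_lt ff e" using n ab unfolding entourage_lt_def by simp
    qed
    then show "entourage_lt ff e \<in> \<U>" using qu_up[OF qu F_U[of 1 "Suc n"]] lt by simp
  qed
  have rc: "right_continuous \<U> ff" unfolding right_continuous_def using ff_cont_pr[OF B(3)] by blast
  have sub: "{y. ff x y < 1} \<subseteq> U `` {x}" for x
  proof
    fix y assume "y \<in> {y. ff x y < 1}"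
    then have "y \<in> cl (W 0 `` {x})" using ff_lt1 by simp
    then show "y \<in> U `` {x}" using W0(2) W(1) by (meson subsetD)
  qed
  show ?thesis using pm un rc sub ff_le1 by (intro exI[of _ ff] conjI allI) auto
qed

lemma strong_lemma:
  assumes qu: "quasi_uniformity \<U>" and ro: "rotund \<U>" and reg: "uniformly_regular \<U>"
    and U: "U \<in> \<U>"
  shows "\<exists>d. quasi_pseudometric d \<and> uniform_premetric \<U> d \<and> right_continuous \<U> d \<and>
        closure_dist_continuous \<U> d \<and> entourage_lt d 1 \<subseteq> U"
proof -
  obtain B where B: "is_base \<U> B" "multiplicative B" "rotund_base \<U> B"
    using ro unfolding rotund_def by blast
  obtain W0 where W0: "W0 \<in> B" "\<forall>x. qu_topology \<U> closure_of (W0 `` {x}) \<subseteq> U `` {x}"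
    using reg_base[OF qu reg B(1) U] by blast
  obtain W where W: "W 0 = W0" "\<forall>k. W k \<in> B" "\<forall>k. W (Suc k) O W (Suc k) \<subseteq> W k"
    using chain_exists[OF qu B(1) W0(1)] by blast
  interpret qchain \<U> B W using qu B W by unfold_locales auto
  have sub: "entourage_lt dd 1 \<subseteq> U"
  proof
    fix p assume p: "p \<in> entourage_lt dd 1"
    obtain x y where ab: "p = (x, y)" by fastforce
    then have "dd x y < 1" using p unfolding entourage_lt_def by simp
    then have "ff x y < 1" using dd_ge_ff[of x y] by linarith
    then have "y \<in> cl (W 0 `` {x})" using ff_lt1 by simp
    then have "y \<in> U `` {x}" using W0(2) W(1) by (meson subsetD)
    then show "p \<in> U" using ab by simp
  qed
  show ?thesis using dd_qpm dd_uniform[OF B(3)] dd_rc[OF B(3)] dd_cdc[OF B(3)] sub by (intro exI[of _ dd] conjI)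
qed

lemma finite_inter:
  assumes qu: "quasi_uniformity \<U>"
  shows "finite F \<Longrightarrow> F \<subseteq> \<U> \<Longrightarrow> \<Inter>F \<in> \<U>"
proof (induction F rule: finite_induct)
  case empty
  obtain U where "U \<in> \<U>" using qu_ne[OF qu] by blast
  then show ?case using qu_up[OF qu] by simp
next
  case (insert S F)
  then show ?case using qu_int[OF qu] by simp
qed

lemma gen_mem:
  assumes "generates D \<U>" "d \<in> D" "0 < e"
  shows "entourage_lt d e \<in> \<U>"
proof -
  have "{entourage_lt d e} \<subseteq> {entourage_lt d \<epsilon> | d \<epsilon>. d \<in> D \<and> \<epsilon> > 0}"
    using assms(2,3) by auto
  then have "\<Inter>{entourage_lt d e} \<in> {\<Inter>\<F> | \<F>. finite \<F> \<and> \<F> \<subseteq> {entourage_lt d \<epsilon> | d \<epsilon>. d \<in> D \<and> \<epsilon> > 0}}"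
    by (intro CollectI exI[of _ "{entourage_lt d e}"]) simp
  then show ?thesis using assms(1) unfolding generates_def is_base_def by auto
qed

lemma gen_from:
  assumes qu: "quasi_uniformity \<U>" and un: "\<forall>d\<in>D. uniform_premetric \<U> d"
    and sm: "\<forall>U\<in>\<U>. \<exists>d\<in>D. entourage_lt d 1 \<subseteq> U"
  shows "generates D \<U>"
  unfolding generates_def is_base_def
proof (intro conjI ballI)
  show "{\<Inter>\<F> | \<F>. finite \<F> \<and> \<F> \<subseteq> {entourage_lt d \<epsilon> | d \<epsilon>. d \<in> D \<and> \<epsilon> > 0}} \<subseteq> \<U>"
  proof
    fix S assume "S \<in> {\<Inter>\<F> | \<F>. finite \<F> \<and> \<F> \<subseteq> {entourage_lt d \<epsilon> | d \<epsilon>. d \<in> D \<and> \<epsilon> > 0}}"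
    then obtain F where F: "S = \<Inter>F" "finite F" "F \<subseteq> {entourage_lt d \<epsilon> | d \<epsilon>. d \<in> D \<and> \<epsilon> > 0}" by blast
    have "F \<subseteq> \<U>"
    proof
      fix T assume "T \<in> F"
      then obtain d e where "T = entourage_lt d e" "d \<in> D" "0 < e" using F(3) by blast
      then show "T \<in> \<U>" using un unfolding uniform_premetric_def by simp
    qed
    then show "S \<in> \<U>" using finite_inter[OF qu F(2)] F(1) by simp
  qed
next
  fix U assume "U \<in> \<U>"
  then obtain d where d: "d \<in> D" "entourage_lt d 1 \<subseteq> U" using sm by blast
  have "{entourage_lt d 1} \<subseteq> {entourage_lt d \<epsilon> | d \<epsilon>. d \<in> D \<and> \<epsilon> > 0}"
    using d(1) by (auto intro!: exI[of _ d] exI[of _ "1::real"])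
  then have "\<Inter>{entourage_lt d 1} \<in> {\<Inter>\<F> | \<F>. finite \<F> \<and> \<F> \<subseteq> {entourage_lt d \<epsilon> | d \<epsilon>. d \<in> D \<and> \<epsilon> > 0}}"
    by (intro CollectI exI[of _ "{entourage_lt d 1}"]) simp
  then show "\<exists>B\<in>{\<Inter>\<F> | \<F>. finite \<F> \<and> \<F> \<subseteq> {entourage_lt d \<epsilon> | d \<epsilon>. d \<in> D \<and> \<epsilon> > 0}}. B \<subseteq> U"
    using d(2) by (intro bexI) auto
qed

lemma closed_le:
  assumes qu: "quasi_uniformity \<U>" and rc: "right_continuous \<U> d"
  shows "closedin (qu_topology \<U>) {y. d x y \<le> c}"
proof -
  have "continuous_map (qu_topology \<U>) euclideanreal (d x)" using rc unfolding right_continuous_def by blast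
  then have "closedin (qu_topology \<U>) {y \<in> topspace (qu_topology \<U>). d x y \<le> c}"
    unfolding continuous_map_upper_lower_semicontinuous_le by blast
  then show ?thesis using topspace_qu[OF qu] by simp
qed

lemma gen_imp_reg:
  assumes qu: "quasi_uniformity \<U>" and D: "\<forall>d\<in>D. premetric d \<and> right_continuous \<U> d"
    and gen: "generates D \<U>"
  shows "uniformly_regular \<U>"
  unfolding uniformly_regular_def
proof
  fix U assume U: "U \<in> \<U>"
  define E where "E = {entourage_lt d \<epsilon> | d \<epsilon>. d \<in> D \<and> \<epsilon> > 0}"
  have "\<forall>U\<in>\<U>. \<exists>B\<in>{\<Inter>\<F> | \<F>. finite \<F> \<and> \<F> \<subseteq> E}. B \<subseteq> U"
    using gen unfolding generates_def is_base_def E_def by (elim conjE)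
  then obtain S where S: "S \<in> {\<Inter>\<F> | \<F>. finite \<F> \<and> \<F> \<subseteq> E}" "S \<subseteq> U"
    using U by (meson bexE)
  from S(1) have "\<exists>F. S = \<Inter>F \<and> finite F \<and> F \<subseteq> E" by simp
  then obtain F where F: "S = \<Inter>F" "finite F" "F \<subseteq> E" by (elim exE conjE)
  have "\<exists>p. T = entourage_lt (fst p) (snd p) \<and> fst p \<in> D \<and> snd p > 0" if "T \<in> F" for T
  proof -
    have "T \<in> E" using that F(3) by (rule subsetD[rotated])
    then obtain d e where "T = entourage_lt d e" "d \<in> D" "0 < e" unfolding E_def by blast
    then show ?thesis by (intro exI[of _ "(d, e)"]) simp
  qed
  then obtain c where c: "\<And>T. T \<in> F \<Longrightarrow> T = entourage_lt (fst (c T)) (snd (c T)) \<and> fst (c T) \<in> D \<and> snd (c T) > 0"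
    by metis
  define V where "V = \<Inter>((\<lambda>T. entourage_lt (fst (c T)) (snd (c T) / 2)) ` F)"
  have "(\<lambda>T. entourage_lt (fst (c T)) (snd (c T) / 2)) ` F \<subseteq> \<U>"
  proof
    fix X assume "X \<in> (\<lambda>T. entourage_lt (fst (c T)) (snd (c T) / 2)) ` F"
    then obtain T where T: "T \<in> F" "X = entourage_lt (fst (c T)) (snd (c T) / 2)" by (rule imageE)
    have "fst (c T) \<in> D" "0 < snd (c T) / 2" using c[OF T(1)] by auto
    then show "X \<in> \<U>" unfolding T(2) by (rule gen_mem[OF gen])
  qed
  then have "V \<in> \<U>" unfolding V_def using F(2) by (intro finite_inter[OF qu]) auto
  moreover have "qu_topology \<U> closure_of (V `` {x}) \<subseteq> U `` {x}" for x
  proof -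
    define C where "C = \<Inter>(insert UNIV ((\<lambda>T. {y. fst (c T) x y \<le> snd (c T) / 2}) ` F))"
    have Ccl: "closedin (qu_topology \<U>) C" unfolding C_def
    proof (rule closedin_Inter)
      fix K assume "K \<in> insert UNIV ((\<lambda>T. {y. fst (c T) x y \<le> snd (c T) / 2}) ` F)"
      then show "closedin (qu_topology \<U>) K"
      proof (rule insertE)
        assume "K = UNIV" then show ?thesis using topspace_qu[OF qu] closedin_topspace by metis
      next
        assume "K \<in> (\<lambda>T. {y. fst (c T) x y \<le> snd (c T) / 2}) ` F"
        then obtain T where T: "T \<in> F" "K = {y. fst (c T) x y \<le> snd (c T) / 2}" by (rule imageE)
        have "right_continuous \<U> (fst (c T))" using c[OF T(1)] D by simp
        then show ?thesis unfolding T(2) by (rule closed_le[OF qu])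
      qed
    qed simp
    have "V `` {x} \<subseteq> C" unfolding V_def C_def entourage_lt_def by (auto intro: less_imp_le)
    then have "qu_topology \<U> closure_of (V `` {x}) \<subseteq> C" using Ccl by (rule closure_of_minimal)
    moreover have "C \<subseteq> U `` {x}"
    proof
      fix y assume y: "y \<in> C"
      have "(x, y) \<in> T" if T: "T \<in> F" for T
      proof -
        have "fst (c T) x y \<le> snd (c T) / 2" using y T unfolding C_def by auto
        moreover have Teq: "T = entourage_lt (fst (c T)) (snd (c T))" and "snd (c T) > 0" using c[OF T] by auto
        ultimately have "fst (c T) x y < snd (c T)" by linarith
        then have "(x, y) \<in> entourage_lt (fst (c T)) (snd (c T))" unfolding entourage_lt_def by simp
        then show ?thesis using Teq by (rule ssubst[of T, rotated])
      qed
      then have "(x, y) \<in> S" using F(1) by simp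
      then have "(x, y) \<in> U" using S(2) by (rule subsetD[rotated])
      then show "y \<in> U `` {x}" by simp
    qed
    ultimately show ?thesis by (rule subset_trans)
  qed
  ultimately show "\<exists>V\<in>\<U>. \<forall>x. qu_topology \<U> closure_of (V `` {x}) \<subseteq> U `` {x}" by blast
qed

lemma min_base:
  assumes qu: "quasi_uniformity \<U>"
  shows "\<exists>Bm. is_base \<U> Bm \<and> (\<forall>B'. is_base \<U> B' \<longrightarrow> Bm \<lesssim> B')"
proof -
  let ?R = "{card_of B | B. is_base \<U> B}"
  have "is_base \<U> \<U>" unfolding is_base_def by blast
  then have "?R \<noteq> {}" by blast
  moreover have "\<forall>r\<in>?R. Card_order r" using card_of_Card_order by blast
  ultimately obtain r where r: "r \<in> ?R" "\<forall>r'\<in>?R. (r, r') \<in> ordLeq"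
    using exists_minim_Card_order[of ?R] by blast
  then obtain Bm where Bm: "is_base \<U> Bm" "r = card_of Bm" by blast
  have "Bm \<lesssim> B'" if "is_base \<U> B'" for B'
  proof -
    have "(card_of Bm, card_of B') \<in> ordLeq" using r(2) Bm(2) that by blast
    then show ?thesis unfolding lepoll_def using card_of_ordLeq by blast
  qed
  then show ?thesis using Bm(1) by blast
qed



theorem theorem3p4:
  fixes \<U> :: "('a \<times> 'a) set set"
  assumes "quasi_uniformity \<U>" and "point_rotund \<U>"
  shows "(uniformly_semiregular \<U> \<longleftrightarrow> uniformly_regular \<U>)
       \<and> (uniformly_regular \<U> \<longleftrightarrow> uniformly_completely_regular \<U>)
       \<and> (rotund \<U> \<longrightarrow>
            (uniformly_regular \<U> \<longleftrightarrow>
               (\<exists>\<D>. (\<forall>d\<in>\<D>. premetric d \<and> right_continuous \<U> d) \<and> generates \<D> \<U>))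
          \<and> (uniformly_regular \<U> \<longleftrightarrow>
               (\<exists>\<D>. (\<forall>d\<in>\<D>. quasi_pseudometric d \<and> right_continuous \<U> d
                          \<and> closure_dist_continuous \<U> d)
                    \<and> generates \<D> \<U> \<and> card_le_chi \<D> \<U>)))"
proof -
  note qu = assms(1) and pr = assms(2)
  have reg_semi: "uniformly_regular \<U> \<Longrightarrow> uniformly_semiregular \<U>"
    unfolding uniformly_regular_def uniformly_semiregular_def
    by (meson interior_of_subset subset_trans)
  have semi_reg: "uniformly_semiregular \<U> \<Longrightarrow> uniformly_regular \<U>"
    unfolding uniformly_regular_def
  proof
    fix U assume semi: "uniformly_semiregular \<U>" and U: "U \<in> \<U>"
    obtain W where W: "W \<in> \<U>" "\<And>x. qu_topology \<U> interior_of (qu_topology \<U> closure_of (W `` {x})) \<subseteq> U `` {x}"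
      using semi U unfolding uniformly_semiregular_def by blast
    obtain V1 where V1: "V1 \<in> \<U>" "V1 O V1 \<subseteq> W" using qu_half[OF qu W(1)] by blast
    obtain B where B: "is_base \<U> B" "multiplicative B" "point_rotund_base \<U> B"
      using pr unfolding point_rotund_def by blast
    obtain V where V: "V \<in> B" "V \<subseteq> V1" using B(1) V1(1) unfolding is_base_def by blast
    have VU: "V \<in> \<U>" using B(1) V(1) unfolding is_base_def by auto
    have VV: "V O V \<subseteq> W" using relcomp_mono[OF V(2) V(2)] V1(2) by (rule subset_trans)
    have "qu_topology \<U> closure_of (V `` {x}) \<subseteq> U `` {x}" for x
    proof -
      have "qu_topology \<U> closure_of (V `` {x}) \<subseteq>
            qu_topology \<U> interior_of (qu_topology \<U> closure_of ((V O V) `` {x}))"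
        using B(3) V(1) unfolding point_rotund_base_def by simp
      also have "\<dots> \<subseteq> qu_topology \<U> interior_of (qu_topology \<U> closure_of (W `` {x}))"
        using VV by (intro interior_of_mono closure_of_mono Image_mono) auto
      also have "\<dots> \<subseteq> U `` {x}" by (rule W(2))
      finally show ?thesis .
    qed
    then show "\<exists>V\<in>\<U>. \<forall>x. qu_topology \<U> closure_of (V `` {x}) \<subseteq> U `` {x}" using VU by blast
  qed
  have reg_ucr: "uniformly_regular \<U> \<Longrightarrow> uniformly_completely_regular \<U>"
    unfolding uniformly_completely_regular_def using ucr_lemma[OF qu pr] by blast
  have ucr_reg: "uniformly_completely_regular \<U> \<Longrightarrow> uniformly_regular \<U>"
    unfolding uniformly_regular_def
  proof
    fix U assume ucr: "uniformly_completely_regular \<U>" and U: "U \<in> \<U>"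
    obtain d where d: "premetric d" "uniform_premetric \<U> d" "right_continuous \<U> d"
      "\<And>x. {y. d x y < 1} \<subseteq> U `` {x}"
      using ucr U unfolding uniformly_completely_regular_def by blast
    have VU: "entourage_lt d (1/2) \<in> \<U>" using d(2) unfolding uniform_premetric_def by simp
    have "qu_topology \<U> closure_of (entourage_lt d (1/2) `` {x}) \<subseteq> U `` {x}" for x
    proof -
      have "entourage_lt d (1/2) `` {x} \<subseteq> {y. d x y \<le> 1/2}" unfolding entourage_lt_def by auto
      then have "qu_topology \<U> closure_of (entourage_lt d (1/2) `` {x}) \<subseteq> {y. d x y \<le> 1/2}"
        using closed_le[OF qu d(3)] by (rule closure_of_minimal)
      also have "\<dots> \<subseteq> {y. d x y < 1}" by auto
      also have "\<dots> \<subseteq> U `` {x}" by (rule d(4))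
      finally show ?thesis .
    qed
    then show "\<exists>V\<in>\<U>. \<forall>x. qu_topology \<U> closure_of (V `` {x}) \<subseteq> U `` {x}" using VU by blast
  qed
  have gen4: "uniformly_regular \<U> \<Longrightarrow>
      \<exists>\<D>. (\<forall>d\<in>\<D>. premetric d \<and> right_continuous \<U> d) \<and> generates \<D> \<U>"
  proof -
    assume reg: "uniformly_regular \<U>"
    define D where "D = {d. premetric d \<and> right_continuous \<U> d \<and> uniform_premetric \<U> d}"
    have "\<forall>U\<in>\<U>. \<exists>d\<in>D. entourage_lt d 1 \<subseteq> U"
    proof
      fix U assume U: "U \<in> \<U>"
      obtain d where d: "premetric d" "uniform_premetric \<U> d" "right_continuous \<U> d"
        "\<And>x. {y. d x y < 1} \<subseteq> U `` {x}"
        using ucr_lemma[OF qu pr reg U] by blast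
      have "entourage_lt d 1 \<subseteq> U" unfolding entourage_lt_def using d(4) by auto
      moreover have "d \<in> D" unfolding D_def using d by simp
      ultimately show "\<exists>d\<in>D. entourage_lt d 1 \<subseteq> U" by blast
    qed
    moreover have "\<forall>d\<in>D. uniform_premetric \<U> d" unfolding D_def by simp
    ultimately have "generates D \<U>" using gen_from[OF qu] by blast
    moreover have "\<forall>d\<in>D. premetric d \<and> right_continuous \<U> d" unfolding D_def by simp
    ultimately show ?thesis by blast
  qed
  have gen5: "rotund \<U> \<Longrightarrow> uniformly_regular \<U> \<Longrightarrow>
      \<exists>\<D>. (\<forall>d\<in>\<D>. quasi_pseudometric d \<and> right_continuous \<U> d \<and> closure_dist_continuous \<U> d)
           \<and> generates \<D> \<U> \<and> card_le_chi \<D> \<U>"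
  proof -
    assume ro: "rotund \<U>" and reg: "uniformly_regular \<U>"
    obtain Bm where Bm: "is_base \<U> Bm" "\<And>B'. is_base \<U> B' \<Longrightarrow> Bm \<lesssim> B'"
      using min_base[OF qu] by blast
    have "\<forall>U\<in>Bm. \<exists>d. quasi_pseudometric d \<and> uniform_premetric \<U> d \<and> right_continuous \<U> d \<and>
        closure_dist_continuous \<U> d \<and> entourage_lt d 1 \<subseteq> U"
      using strong_lemma[OF qu ro reg] Bm(1) unfolding is_base_def by blast
    then obtain df where df: "\<And>U. U \<in> Bm \<Longrightarrow> quasi_pseudometric (df U) \<and> uniform_premetric \<U> (df U) \<and>
        right_continuous \<U> (df U) \<and> closure_dist_continuous \<U> (df U) \<and> entourage_lt (df U) 1 \<subseteq> U"
      by metis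
    define D where "D = df ` Bm"
    have un: "\<forall>d\<in>D. uniform_premetric \<U> d" unfolding D_def using df by blast
    have sm: "\<forall>U\<in>\<U>. \<exists>d\<in>D. entourage_lt d 1 \<subseteq> U"
    proof
      fix U assume "U \<in> \<U>"
      then obtain U' where U': "U' \<in> Bm" "U' \<subseteq> U" using Bm(1) unfolding is_base_def by blast
      then have "entourage_lt (df U') 1 \<subseteq> U" using df[OF U'(1)] by blast
      moreover have "df U' \<in> D" unfolding D_def using U'(1) by blast
      ultimately show "\<exists>d\<in>D. entourage_lt d 1 \<subseteq> U" by blast
    qed
    have "generates D \<U>" by (rule gen_from[OF qu un sm])
    moreover have "card_le_chi D \<U>" unfolding card_le_chi_def
    proof (intro allI impI)
      fix B' assume "is_base \<U> B'"
      then have "Bm \<lesssim> B'" by (rule Bm(2))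
      then show "D \<lesssim> B'" unfolding D_def using image_lepoll lepoll_trans by blast
    qed
    moreover have "\<forall>d\<in>D. quasi_pseudometric d \<and> right_continuous \<U> d \<and> closure_dist_continuous \<U> d"
      unfolding D_def using df by blast
    ultimately show ?thesis by blast
  qed
  have from4: "\<exists>\<D>. (\<forall>d\<in>\<D>. premetric d \<and> right_continuous \<U> d) \<and> generates \<D> \<U> \<Longrightarrow>
      uniformly_regular \<U>"
    using gen_imp_reg[OF qu] by blast
  have from5: "\<exists>\<D>. (\<forall>d\<in>\<D>. quasi_pseudometric d \<and> right_continuous \<U> d \<and> closure_dist_continuous \<U> d)
           \<and> generates \<D> \<U> \<and> card_le_chi \<D> \<U> \<Longrightarrow> uniformly_regular \<U>"
  proof -
    assume "\<exists>\<D>. (\<forall>d\<in>\<D>. quasi_pseudometric d \<and> right_continuous \<U> d \<and> closure_dist_continuous \<U> d)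
           \<and> generates \<D> \<U> \<and> card_le_chi \<D> \<U>"
    then obtain D where D: "\<forall>d\<in>D. quasi_pseudometric d \<and> right_continuous \<U> d" "generates D \<U>" by blast
    have "\<forall>d\<in>D. premetric d \<and> right_continuous \<U> d" using D(1) unfolding quasi_pseudometric_def by blast
    then show ?thesis using gen_imp_reg[OF qu _ D(2)] by blast
  qed
  show ?thesis
    using reg_semi semi_reg reg_ucr ucr_reg gen4 gen5 from4 from5 by blast
qed


end
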